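(* For every $\varepsilon>0$ there exists $\delta>0$ such that the following holds. Let $G$ be a connected graph on vertex set $[n]$ with maximum degree $\Delta$, let $R\sim G(n,\varepsilon/n)$, and let $G^*=G\cup R$. Then asymptotically almost surely (i.e., with probability tending to $1$ as $n\to\infty$) the graph $G^*$ satisfies $\iota(G^* )\ge \frac{\delta}{\Delta^3\log n}$.
   Context: $G(n,p)$ denotes the binomial random graph on vertex set $[n]$ in which each of the $\binom n2$ pairs is an edge independently with probability $p$. $G\cup R$ is the graph on $[n]$ whose edge set is the union of the edge sets of $G$ and $R$. For a graph $H$ on vertex set $V$ and $S\subseteq V$, $N_H(S)$ is the set of vertices in $V\setminus S$ having a neighbor in $S$. The vertex-isoperimetric number is $\iota(H)=\min\{|N_H(U)|/|U| : U\subseteq V,\ 0<|U|\le |V|/2\}$. "Asymptotically almost surely" is understood for an arbitrary sequence of such graphs $G=G_n$, with $n\to\infty$. *)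

theory Defs
  imports Complex_Main
begin

definition all_edges :: "nat \<Rightarrow> nat set set" where
  "all_edges n = {e. \<exists>u v. e = {u, v} \<and> u \<noteq> v \<and> u \<in> {1..n} \<and> v \<in> {1..n}}"

definition is_graph :: "nat \<Rightarrow> nat set set \<Rightarrow> bool" where
  "is_graph n E \<longleftrightarrow> E \<subseteq> all_edges n"

definition adj_rel :: "nat set set \<Rightarrow> (nat \<times> nat) set" where
  "adj_rel E = {(u, v). {u, v} \<in> E}"

definition graph_connected :: "nat \<Rightarrow> nat set set \<Rightarrow> bool" where
  "graph_connected n E \<longleftrightarrow> (\<forall>u\<in>{1..n}. \<forall>v\<in>{1..n}. (u, v) \<in> (adj_rel E)\<^sup>*)"

definition degree :: "nat set set \<Rightarrow> nat \<Rightarrow> nat" where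
  "degree E v = card {u. {u, v} \<in> E \<and> u \<noteq> v}"

definition max_degree :: "nat \<Rightarrow> nat set set \<Rightarrow> nat" where
  "max_degree n E = Max (degree E ` {1..n})"

definition nbhd :: "nat \<Rightarrow> nat set set \<Rightarrow> nat set \<Rightarrow> nat set" where
  "nbhd n E S = {v \<in> {1..n} - S. \<exists>u\<in>S. {u, v} \<in> E}"

text \<open>Vertex-isoperimetric number (minimum over a finite nonempty set when n \<ge> 2).\<close>
definition iota :: "nat \<Rightarrow> nat set set \<Rightarrow> real" where
  "iota n E = Min {real (card (nbhd n E U)) / real (card U) | U.
                    U \<subseteq> {1..n} \<and> 0 < card U \<and> real (card U) \<le> real n / 2}"

definition gnp_prob :: "nat \<Rightarrow> real \<Rightarrow> (nat set set \<Rightarrow> bool) \<Rightarrow> real" where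
  "gnp_prob n p P = (\<Sum>R\<in>Pow (all_edges n).
      if P R then p ^ card R * (1 - p) ^ (card (all_edges n) - card R) else 0)"

end

theory Submission
  imports Defs "HOL-Real_Asymp.Real_Asymp"
begin


lemma binom_pow:
  assumes "finite B"
  shows "(\<Sum>R\<in>Pow B. (a::real) ^ card R * b ^ (card B - card R)) = (a + b) ^ card B"
proof -
  have "(\<Prod>x\<in>B. a + b) = (\<Sum>X\<in>Pow B. (\<Prod>x\<in>X. a) * (\<Prod>x\<in>B-X. b))"
    by (rule prod_add[OF assms])
  also have "\<dots> = (\<Sum>R\<in>Pow B. a ^ card R * b ^ (card B - card R))"
    apply (rule sum.cong[OF refl])
    using assms by (auto simp: card_Diff_subset finite_subset)
  finally show ?thesis by simp
qed

lemma finite_all_edges: "finite (all_edges n)"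
proof -
  have "all_edges n \<subseteq> Pow {1..n}" unfolding all_edges_def by auto
  thus ?thesis by (rule finite_subset) simp
qed

lemma gnp_avoid:
  assumes "F \<subseteq> all_edges n"
  shows "gnp_prob n p (\<lambda>R. R \<inter> F = {}) = (1 - p) ^ card F"
proof -
  let ?A = "all_edges n"
  have fA: "finite ?A" by (rule finite_all_edges)
  have fF: "finite F" using assms fA finite_subset by blast
  have "gnp_prob n p (\<lambda>R. R \<inter> F = {}) = (\<Sum>R\<in>{R\<in>Pow ?A. R \<inter> F = {}}. p ^ card R * (1 - p) ^ (card ?A - card R))"
    unfolding gnp_prob_def by (rule sum.inter_filter[symmetric]) (simp add: fA)
  also have "{R\<in>Pow ?A. R \<inter> F = {}} = Pow (?A - F)" by auto
  also have "(\<Sum>R\<in>Pow (?A - F). p ^ card R * (1 - p) ^ (card ?A - card R))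
      = (\<Sum>R\<in>Pow (?A - F). (1-p) ^ card F * (p ^ card R * (1 - p) ^ (card (?A - F) - card R)))"
  proof (rule sum.cong[OF refl])
    fix R assume R: "R \<in> Pow (?A - F)"
    have cF: "card ?A = card (?A - F) + card F" using assms fA
      by (metis card_Diff_subset card_mono fF le_add_diff_inverse2)
    have "card R \<le> card (?A - F)" using R fA by (auto intro: card_mono)
    hence "card ?A - card R = (card (?A - F) - card R) + card F" using cF by linarith
    thus "p ^ card R * (1 - p) ^ (card ?A - card R) = (1-p) ^ card F * (p ^ card R * (1 - p) ^ (card (?A - F) - card R))"
      by (simp add: power_add)
  qed
  also have "\<dots> = (1-p) ^ card F * (p + (1-p)) ^ card (?A - F)"
    by (simp add: sum_distrib_left[symmetric] binom_pow fA)
  finally show ?thesis by simp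
qed

lemma gnp_total: "gnp_prob n p P + gnp_prob n p (\<lambda>R. \<not> P R) = 1"
proof -
  have "gnp_prob n p P + gnp_prob n p (\<lambda>R. \<not> P R) = gnp_prob n p (\<lambda>R. R \<inter> {} = {})"
    unfolding gnp_prob_def by (simp add: sum.distrib[symmetric]) (rule sum.cong, auto)
  thus ?thesis using gnp_avoid[of "{}" n p] by simp
qed

lemma gnp_nonneg: assumes "0 \<le> p" "p \<le> 1" shows "0 \<le> gnp_prob n p P"
  unfolding gnp_prob_def using assms by (intro sum_nonneg) auto

lemma gnp_union:
  assumes p: "0 \<le> p" "p \<le> 1" and fI: "finite I" and FA: "\<And>i. i \<in> I \<Longrightarrow> F i \<subseteq> all_edges n"
    and cov: "\<And>R. R \<subseteq> all_edges n \<Longrightarrow> P R \<Longrightarrow> \<exists>i\<in>I. R \<inter> F i = {}"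
  shows "gnp_prob n p P \<le> (\<Sum>i\<in>I. (1 - p) ^ card (F i))"
proof -
  let ?A = "all_edges n"
  let ?w = "\<lambda>R. p ^ card R * (1 - p) ^ (card ?A - card R)"
  have w0: "\<And>R. 0 \<le> ?w R" using p by simp
  have "gnp_prob n p P \<le> (\<Sum>R\<in>Pow ?A. \<Sum>i\<in>I. if R \<inter> F i = {} then ?w R else 0)"
    unfolding gnp_prob_def
  proof (rule sum_mono)
    fix R assume R: "R \<in> Pow ?A"
    show "(if P R then ?w R else 0) \<le> (\<Sum>i\<in>I. if R \<inter> F i = {} then ?w R else 0)"
    proof (cases "P R")
      case True
      then obtain i where i: "i \<in> I" "R \<inter> F i = {}" using cov R by blast
      have "?w R = (if R \<inter> F i = {} then ?w R else 0)" using i by simp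
      also have "\<dots> \<le> (\<Sum>i\<in>I. if R \<inter> F i = {} then ?w R else 0)"
        by (rule member_le_sum[OF i(1)]) (use w0 fI in auto)
      finally show ?thesis using True by simp
    next
      case False
      have "0 \<le> (\<Sum>i\<in>I. if R \<inter> F i = {} then ?w R else 0)"
        by (rule sum_nonneg) (use w0 in auto)
      thus ?thesis using False by simp
    qed
  qed
  also have "\<dots> = (\<Sum>i\<in>I. gnp_prob n p (\<lambda>R. R \<inter> F i = {}))"
    unfolding gnp_prob_def by (rule sum.swap)
  also have "\<dots> = (\<Sum>i\<in>I. (1 - p) ^ card (F i))"
    by (rule sum.cong[OF refl]) (simp add: gnp_avoid FA)
  finally show ?thesis .
qed



definition closedW :: "nat \<Rightarrow> nat set set \<Rightarrow> nat set \<Rightarrow> nat set \<Rightarrow> bool" where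
  "closedW n G W U \<longleftrightarrow> U \<subseteq> {1..n} - W \<and> (\<forall>a\<in>U. \<forall>b. {a,b} \<in> G \<longrightarrow> b \<notin> W \<longrightarrow> b \<in> U)"

definition NG :: "nat \<Rightarrow> nat set set \<Rightarrow> nat set \<Rightarrow> nat set" where
  "NG n G W = {y \<in> {1..n} - W. \<exists>z\<in>W. {z,y} \<in> G}"

lemma edge_in: "is_graph n G \<Longrightarrow> {a,b} \<in> G \<Longrightarrow> b \<in> {1..n} \<and> a \<in> {1..n} \<and> a \<noteq> b"
  unfolding is_graph_def all_edges_def by (auto simp: doubleton_eq_iff)

lemma crossing:
  assumes "(x,z) \<in> (adj_rel G)\<^sup>*"
  shows "x \<in> U \<Longrightarrow> z \<notin> U \<Longrightarrow> \<exists>a\<in>U. \<exists>b. b \<notin> U \<and> {a,b} \<in> G"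
  using assms
proof (induction rule: converse_rtrancl_induct)
  case base thus ?case by simp
next
  case (step y w)
  show ?case
  proof (cases "w \<in> U")
    case True thus ?thesis using step by blast
  next
    case False thus ?thesis using step by (auto simp: adj_rel_def)
  qed
qed

lemma path_lemma:
  assumes "(x,z) \<in> (adj_rel G)\<^sup>*" "z \<in> W" "closedW n G W U" "closedW n G W U'"
    "U \<inter> NG n G W = U' \<inter> NG n G W" "is_graph n G"
  shows "x \<notin> W \<Longrightarrow> x \<in> U \<Longrightarrow> x \<in> U'"
  using assms(1)
proof (induction rule: converse_rtrancl_induct)
  case base thus ?case using assms by simp
next
  case (step y w)
  have e: "{y,w} \<in> G" using step(1) by (simp add: adj_rel_def)
  have yn: "y \<in> {1..n}" using edge_in[OF assms(6) e] by simp
  show ?case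
  proof (cases "w \<in> W")
    case True
    have "y \<in> NG n G W" unfolding NG_def using True e yn step(4) by (auto simp: insert_commute)
    thus ?thesis using step(5) assms(5) by blast
  next
    case False
    have "w \<in> U" using assms(3) e False step(5) unfolding closedW_def by blast
    hence "w \<in> U'" using step.IH False by blast
    moreover have "{w,y} \<in> G" using e by (simp add: insert_commute)
    ultimately show ?thesis using assms(4) step(4) unfolding closedW_def by blast
  qed
qed

lemma closed_inj:
  assumes "is_graph n G" "graph_connected n G" "W \<subseteq> {1..n}" "W \<noteq> {}"
  shows "inj_on (\<lambda>U. U \<inter> NG n G W) {U. closedW n G W U}"
proof -
  obtain z where z: "z \<in> W" using assms(4) by blast
  have sub: "U \<subseteq> U'" if "closedW n G W U" "closedW n G W U'" "U \<inter> NG n G W = U' \<inter> NG n G W" for U U'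
  proof
    fix x assume x: "x \<in> U"
    have xn: "x \<in> {1..n}" "x \<notin> W" using x that(1) unfolding closedW_def by auto
    have "(x,z) \<in> (adj_rel G)\<^sup>*" using assms(2) xn z assms(3) unfolding graph_connected_def by blast
    from path_lemma[OF this z that assms(1) xn(2) x] show "x \<in> U'" .
  qed
  show ?thesis unfolding inj_on_def
    by (metis (mono_tags) mem_Collect_eq sub subset_antisym)
qed

lemma card_closed:
  assumes "is_graph n G" "graph_connected n G" "W \<subseteq> {1..n}" "W \<noteq> {}"
  shows "card {U. closedW n G W U} \<le> 2 ^ card (NG n G W)"
proof -
  have "card {U. closedW n G W U} \<le> card (Pow (NG n G W))"
  proof (rule card_inj_on_le[OF closed_inj[OF assms]])
    show "(\<lambda>U. U \<inter> NG n G W) ` {U. closedW n G W U} \<subseteq> Pow (NG n G W)" by auto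
    show "finite (Pow (NG n G W))" unfolding NG_def by simp
  qed
  moreover have "finite (NG n G W)" unfolding NG_def by simp
  ultimately show ?thesis by (simp add: card_Pow)
qed

lemma degree_le: "v \<in> {1..n} \<Longrightarrow> degree G v \<le> max_degree n G"
  unfolding max_degree_def by (rule Max_ge) auto

lemma card_NG:
  assumes "is_graph n G" "W \<subseteq> {1..n}"
  shows "card (NG n G W) \<le> max_degree n G * card W"
proof -
  let ?S = "\<lambda>z. {u. {u, z} \<in> G \<and> u \<noteq> z}"
  have fS: "finite (?S z)" for z
    by (rule finite_subset[of _ "{1..n}"]) (use edge_in[OF assms(1)] in auto)
  have fW: "finite W" using assms(2) finite_subset by blast
  have "NG n G W \<subseteq> (\<Union>z\<in>W. ?S z)" unfolding NG_def by (auto simp: insert_commute)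
  hence "card (NG n G W) \<le> card (\<Union>z\<in>W. ?S z)"
    by (rule card_mono[rotated]) (use fS fW in auto)
  also have "\<dots> \<le> (\<Sum>z\<in>W. card (?S z))" by (rule card_UN_le[OF fW])
  also have "\<dots> \<le> (\<Sum>z\<in>W. max_degree n G)"
    by (rule sum_mono) (use degree_le assms(2) in \<open>auto simp: degree_def\<close>)
  finally show ?thesis by (simp add: mult.commute)
qed

lemma maxdeg_pos:
  assumes "is_graph n G" "graph_connected n G" "n \<ge> 2"
  shows "max_degree n G \<ge> 1"
proof -
  have "(1,2) \<in> (adj_rel G)\<^sup>*" using assms unfolding graph_connected_def by auto
  from crossing[OF this, of "{1}"] obtain b where b: "b \<noteq> 1" "{1,b} \<in> G" by auto
  have "finite {u. {u, 1} \<in> G \<and> u \<noteq> 1}"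
    by (rule finite_subset[of _ "{1..n}"]) (use edge_in[OF assms(1)] in auto)
  moreover have "b \<in> {u. {u, 1} \<in> G \<and> u \<noteq> 1}" using b by (auto simp: insert_commute)
  ultimately have "degree G 1 \<ge> 1" unfolding degree_def
    by (metis One_nat_def Suc_leI card_gt_0_iff empty_iff)
  moreover have "degree G 1 \<le> max_degree n G" by (rule degree_le) (use assms in auto)
  ultimately show ?thesis by simp
qed



definition cross :: "nat \<Rightarrow> nat set \<Rightarrow> nat set \<Rightarrow> nat set set" where
  "cross n U W = (\<lambda>(x,y). {x,y}) ` (U \<times> ({1..n} - U - W))"

lemma cross_sub: "U \<subseteq> {1..n} \<Longrightarrow> cross n U W \<subseteq> all_edges n"
  unfolding cross_def all_edges_def by force

lemma card_cross:
  assumes "U \<subseteq> {1..n}" "W \<subseteq> {1..n}" "U \<inter> W = {}"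
  shows "real (card (cross n U W)) = real (card U) * (real n - real (card U) - real (card W))"
proof -
  let ?Y = "{1..n} - U - W"
  have inj: "inj_on (\<lambda>(x,y). {x,y}) (U \<times> ?Y)"
    unfolding inj_on_def by (auto simp: doubleton_eq_iff)
  have fU: "finite U" "finite W" using assms finite_subset[of _ "{1..n}"] by auto
  have "card ?Y = n - card (U \<union> W)"
  proof -
    have "?Y = {1..n} - (U \<union> W)" by auto
    thus ?thesis using assms by (simp add: card_Diff_subset fU)
  qed
  moreover have cu: "card (U \<union> W) = card U + card W" using assms fU by (simp add: card_Un_disjoint)
  moreover have "card (U \<union> W) \<le> n" using assms by (metis card_atLeastAtMost card_mono diff_Suc_1 finite_atLeastAtMost le_sup_iff)
  ultimately have "real (card ?Y) = real n - real (card U) - real (card W)" by simp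
  moreover have "card (cross n U W) = card U * card ?Y"
    unfolding cross_def using card_image[OF inj] by (simp add: card_cartesian_product)
  ultimately show ?thesis by simp
qed

lemma cover:
  assumes g: "is_graph n G" and c: "graph_connected n G" and n2: "n \<ge> 2"
    and bad: "\<not> \<alpha> \<le> iota n (G \<union> R)"
  shows "\<exists>W U. W \<in> Pow {1..n} - {{}} \<and> closedW n G W U \<and> real (card W) < \<alpha> * real (card U)
           \<and> real (card U) \<le> real n / 2 \<and> 0 < card U \<and> R \<inter> cross n U W = {}"
proof -
  let ?f = "\<lambda>U. real (card (nbhd n (G \<union> R) U)) / real (card U)"
  let ?S = "{?f U | U. U \<subseteq> {1..n} \<and> 0 < card U \<and> real (card U) \<le> real n / 2}"
  have fin: "finite ?S"
    by (rule finite_subset[of _ "?f ` Pow {1..n}"]) auto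
  have "?f {1} \<in> ?S" using n2 by (intro CollectI exI[of _ "{1}"]) auto
  hence ne: "?S \<noteq> {}" by blast
  have "Min ?S < \<alpha>" using bad unfolding iota_def by simp
  then obtain U where U: "U \<subseteq> {1..n}" "0 < card U" "real (card U) \<le> real n / 2" "?f U < \<alpha>"
    using Min_less_iff[OF fin ne] by blast
  define W where "W = nbhd n (G \<union> R) U"
  have Wn: "W \<subseteq> {1..n}" "U \<inter> W = {}" unfolding W_def nbhd_def by auto
  have cu: "real (card U) > 0" using U by simp
  have wlt: "real (card W) < \<alpha> * real (card U)"
    using U(4) cu unfolding W_def by (simp add: divide_less_eq)
  have "U \<noteq> {1..n}"
  proof
    assume "U = {1..n}" hence "real (card U) = real n" by simp
    thus False using U(3) n2 by simp
  qed
  hence "\<not> {1..n} \<subseteq> U" using U(1) by (simp add: subset_antisym)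
  then obtain z where z: "z \<in> {1..n}" "z \<notin> U" by (simp only: subset_iff) blast
  obtain x where x: "x \<in> U" using U(2) by (metis card.empty ex_in_conv less_irrefl)
  have "(x,z) \<in> (adj_rel G)\<^sup>*" using c x z U(1) unfolding graph_connected_def by blast
  from crossing[OF this x z(2)] obtain a b where ab: "a \<in> U" "b \<notin> U" "{a,b} \<in> G" by blast
  have "b \<in> W" unfolding W_def nbhd_def using ab edge_in[OF g ab(3)] by auto
  hence Wne: "W \<noteq> {}" by blast
  have cl: "closedW n G W U" unfolding closedW_def
  proof (intro conjI ballI allI impI)
    show "U \<subseteq> {1..n} - W" using U(1) Wn by blast
  next
    fix a b assume "a \<in> U" "{a,b} \<in> G" "b \<notin> W"
    thus "b \<in> U" unfolding W_def nbhd_def using edge_in[OF g \<open>{a,b} \<in> G\<close>] by auto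
  qed
  have "R \<inter> cross n U W = {}"
  proof (rule ccontr)
    assume "R \<inter> cross n U W \<noteq> {}"
    then obtain a b where "a \<in> U" "b \<in> {1..n} - U - W" "{a,b} \<in> R" unfolding cross_def by (auto simp del: Diff_iff)
    hence "b \<in> W" unfolding W_def nbhd_def by blast
    thus False using \<open>b \<in> {1..n} - U - W\<close> by blast
  qed
  thus ?thesis using Wn Wne cl wlt U(2,3) by (intro exI[of _ W] exI[of _ U]) simp
qed

lemma pow_exp_bound:
  assumes "0 \<le> p" "p \<le> 1"
  shows "(1 - p) ^ m \<le> exp (- (p * real m))"
proof -
  have "(1 - p) ^ m \<le> exp (- p) ^ m"
    by (rule power_mono) (use assms exp_ge_add_one_self[of "-p"] in auto)
  also have "\<dots> = exp (real m * (- p))" by (rule exp_of_nat_mult[symmetric])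
  finally show ?thesis by (simp add: mult.commute)
qed

lemma pair_bound:
  fixes \<epsilon> D L u w n m :: real
  assumes e: "\<epsilon> > 0" and en: "\<epsilon> \<le> n" and D: "D \<ge> 1" and L: "\<epsilon> \<le> L"
    and w0: "0 \<le> w" and u0: "0 \<le> u"
    and wlt: "w < \<epsilon> / 40 / (D ^ 3 * L) * u" and un: "u \<le> n / 2"
    and m: "m = u * (n - u - w)"
  shows "\<epsilon> / n * m \<ge> 10 * w * D ^ 3 * L"
proof -
  have Lp: "L > 0" using e L by simp
  have D3: "D ^ 3 \<ge> 1" using D by simp
  have DL: "D ^ 3 * L \<ge> \<epsilon>" using D3 L Lp
    by (metis dual_order.trans mult_le_cancel_right1 order.strict_iff_not)
  have DLp: "D ^ 3 * L > 0" using DL e by linarith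
  have "\<epsilon> / 40 / (D ^ 3 * L) \<le> 1 / 40"
    using DL e DLp by (simp add: divide_le_eq)
  hence "\<epsilon> / 40 / (D ^ 3 * L) * u \<le> 1 / 40 * u" using u0 by (rule mult_right_mono)
  hence "w < u / 40" using wlt by linarith
  hence nuw: "n - u - w \<ge> n / 4" using un u0 by linarith
  have np: "n > 0" using e en by linarith
  have "\<epsilon> / n * m \<ge> \<epsilon> / n * (u * (n / 4))"
    unfolding m using nuw u0 e np by (intro mult_left_mono) (auto intro: mult_left_mono)
  also have "\<epsilon> / n * (u * (n / 4)) = \<epsilon> * u / 4" using np by (simp add: field_simps)
  finally have A: "\<epsilon> / n * m \<ge> \<epsilon> * u / 4" .
  have "w * (D ^ 3 * L) < \<epsilon> / 40 / (D ^ 3 * L) * u * (D ^ 3 * L)"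
    using wlt DLp by (rule mult_strict_right_mono)
  also have "\<dots> = \<epsilon> * u / 40"
  proof -
    have H: "\<And>K::real. K \<noteq> 0 \<Longrightarrow> \<epsilon> / 40 / K * u * K = \<epsilon> * u / 40" by (simp add: field_simps)
    show ?thesis by (rule H) (use DLp in linarith)
  qed
  finally have "10 * w * D ^ 3 * L < \<epsilon> * u / 4" by (simp add: algebra_simps)
  thus ?thesis using A by linarith
qed

lemma main_bound:
  fixes \<epsilon> :: real
  assumes g: "is_graph n G" and c: "graph_connected n G" and n2: "n \<ge> 2"
    and e: "\<epsilon> > 0" and en: "\<epsilon> \<le> real n" and eL: "\<epsilon> \<le> ln (real n)"
  shows "2 - exp (real n * exp (- 9 * ln (real n))) \<le>
    gnp_prob n (\<epsilon> / real n) (\<lambda>R. \<epsilon> / 40 / (real (max_degree n G) ^ 3 * ln (real n)) \<le> iota n (G \<union> R))"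
proof -
  define D where "D = real (max_degree n G)"
  define L where "L = ln (real n)"
  define \<alpha> where "\<alpha> = \<epsilon> / 40 / (D ^ 3 * L)"
  define p where "p = \<epsilon> / real n"
  define x where "x = exp (- 9 * L)"
  have D1: "D \<ge> 1" unfolding D_def using maxdeg_pos[OF g c n2] by simp
  have Lp: "L > 0" using e eL unfolding L_def by simp
  have np: "real n > 0" using n2 by simp
  have p01: "0 \<le> p" "p \<le> 1" unfolding p_def using e en np by auto
  define S where "S W = {U. closedW n G W U \<and> real (card W) < \<alpha> * real (card U)
           \<and> real (card U) \<le> real n / 2 \<and> 0 < card U}" for W
  define I where "I = Sigma (Pow {1..n} - {{}}) S"
  have SP: "S W \<subseteq> Pow {1..n}" for W unfolding S_def closedW_def by auto
  have fS: "finite (S W)" for W using SP finite_subset by (metis finite_Pow_iff finite_atLeastAtMost)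
  have fI: "finite I" unfolding I_def using fS by (intro finite_SigmaI) auto
  have badb: "gnp_prob n p (\<lambda>R. \<not> \<alpha> \<le> iota n (G \<union> R)) \<le> (\<Sum>i\<in>I. (1 - p) ^ card (cross n (snd i) (fst i)))"
  proof (rule gnp_union[OF p01 fI])
    fix i assume "i \<in> I"
    thus "cross n (snd i) (fst i) \<subseteq> all_edges n" unfolding I_def S_def closedW_def
      by (intro cross_sub) auto
  next
    fix R assume "R \<subseteq> all_edges n" "\<not> \<alpha> \<le> iota n (G \<union> R)"
    from cover[OF g c n2 this(2)] obtain W U where WU: "W \<in> Pow {1..n} - {{}}" "closedW n G W U"
      "real (card W) < \<alpha> * real (card U)" "real (card U) \<le> real n / 2" "0 < card U" "R \<inter> cross n U W = {}"
      by blast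
    have "(W, U) \<in> I" unfolding I_def S_def using WU by auto
    thus "\<exists>i\<in>I. R \<inter> cross n (snd i) (fst i) = {}" using WU(6) by force
  qed
  have pairb: "(1 - p) ^ card (cross n U W) \<le> exp (- (10 * real (card W) * D ^ 3 * L))"
    if W: "W \<in> Pow {1..n} - {{}}" and U: "U \<in> S W" for W U
  proof -
    have cl: "closedW n G W U" and wl: "real (card W) < \<alpha> * real (card U)" and ul: "real (card U) \<le> real n / 2"
      using U unfolding S_def by auto
    have sub: "U \<subseteq> {1..n}" "W \<subseteq> {1..n}" "U \<inter> W = {}" using cl W unfolding closedW_def by auto
    have "p * real (card (cross n U W)) \<ge> 10 * real (card W) * D ^ 3 * L"
      unfolding p_def
      by (rule pair_bound[OF e en D1 _ _ _ _ _ card_cross[OF sub]])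
         (use eL wl ul in \<open>auto simp: L_def \<alpha>_def\<close>)
    hence "exp (- (p * real (card (cross n U W)))) \<le> exp (- (10 * real (card W) * D ^ 3 * L))" by simp
    thus ?thesis using pow_exp_bound[OF p01] order_trans by blast
  qed
  have Wb: "(\<Sum>U\<in>S W. (1 - p) ^ card (cross n U W)) \<le> x ^ card W"
    if W: "W \<in> Pow {1..n} - {{}}" for W
  proof -
    let ?w = "real (card W)"
    have Wsub: "W \<subseteq> {1..n}" "W \<noteq> {}" using W by auto
    have "(\<Sum>U\<in>S W. (1 - p) ^ card (cross n U W)) \<le> (\<Sum>U\<in>S W. exp (- (10 * ?w * D ^ 3 * L)))"
      by (rule sum_mono) (rule pairb[OF W])
    also have "\<dots> = real (card (S W)) * exp (- (10 * ?w * D ^ 3 * L))" by simp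
    also have "real (card (S W)) \<le> 2 ^ (max_degree n G * card W)"
    proof -
      have "card (S W) \<le> card {U. closedW n G W U}"
        by (rule card_mono) (use finite_subset[OF _ finite_Pow_iff[THEN iffD2, OF finite_atLeastAtMost[of 1 n]]] in \<open>auto simp: S_def closedW_def\<close>)
      also have "\<dots> \<le> 2 ^ card (NG n G W)" by (rule card_closed[OF g c Wsub])
      also have "\<dots> \<le> 2 ^ (max_degree n G * card W)" by (rule power_increasing) (use card_NG[OF g Wsub(1)] in auto)
      finally show ?thesis by (metis of_nat_le_iff of_nat_numeral of_nat_power)
    qed
    hence "real (card (S W)) * exp (- (10 * ?w * D ^ 3 * L)) \<le> 2 ^ (max_degree n G * card W) * exp (- (10 * ?w * D ^ 3 * L))"
      by (rule mult_right_mono) simp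
    also have "(2::real) ^ (max_degree n G * card W) \<le> exp (D * ?w * L)"
    proof -
      have "(2::real) ^ (max_degree n G * card W) \<le> real n ^ (max_degree n G * card W)"
        by (rule power_mono) (use n2 in auto)
      also have "real n = exp L" unfolding L_def using np by simp
      also have "exp L ^ (max_degree n G * card W) = exp (real (max_degree n G * card W) * L)"
        by (rule exp_of_nat_mult[symmetric])
      finally show ?thesis unfolding D_def by simp
    qed
    hence "2 ^ (max_degree n G * card W) * exp (- (10 * ?w * D ^ 3 * L)) \<le> exp (D * ?w * L) * exp (- (10 * ?w * D ^ 3 * L))"
      by (rule mult_right_mono) simp
    also have "\<dots> = exp (D * ?w * L - 10 * ?w * D ^ 3 * L)" by (simp add: exp_add[symmetric])
    also have "\<dots> \<le> exp (?w * (- 9 * L))"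
    proof -
      have DD: "1 * 1 \<le> D * D" using D1 by (intro mult_mono) auto
      have DDD: "1 * D \<le> (D * D) * D" using DD D1 by (intro mult_mono) auto
      have D3: "D \<le> D ^ 3" "1 \<le> D ^ 3" using DDD DD D1 unfolding power3_eq_cube by linarith+
      have wL: "?w * L \<ge> 0" using Lp by simp
      have "D * (?w * L) \<le> D ^ 3 * (?w * L)" by (rule mult_right_mono[OF D3(1) wL])
      moreover have "?w * L \<le> D ^ 3 * (?w * L)" using D3(2) wL by (simp add: mult_le_cancel_right1)
      ultimately have "D * ?w * L - 10 * ?w * D ^ 3 * L \<le> ?w * (- 9 * L)" by (simp add: algebra_simps)
      thus ?thesis by simp
    qed
    also have "\<dots> = x ^ card W" unfolding x_def by (rule exp_of_nat_mult)
    finally show ?thesis by simp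
  qed
  have "(\<Sum>i\<in>I. (1 - p) ^ card (cross n (snd i) (fst i))) = (\<Sum>W\<in>Pow {1..n} - {{}}. \<Sum>U\<in>S W. (1 - p) ^ card (cross n U W))"
  proof -
    have "(\<Sum>W\<in>Pow {1..n} - {{}}. \<Sum>U\<in>S W. (1 - p) ^ card (cross n U W))
        = (\<Sum>(W,U)\<in>Sigma (Pow {1..n} - {{}}) S. (1 - p) ^ card (cross n U W))"
      by (rule sum.Sigma) (use fS in auto)
    also have "\<dots> = (\<Sum>i\<in>I. (1 - p) ^ card (cross n (snd i) (fst i)))"
      unfolding I_def by (rule sum.cong) auto
    finally show ?thesis by simp
  qed
  also have "\<dots> \<le> (\<Sum>W\<in>Pow {1..n} - {{}}. x ^ card W)" by (rule sum_mono) (rule Wb)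
  also have "\<dots> = (x + 1) ^ n - 1"
  proof -
    have "(\<Sum>W\<in>Pow {1..n}. x ^ card W) = (\<Sum>W\<in>Pow {1..n}. x ^ card W * 1 ^ (card {1..n} - card W))" by simp
    also have "\<dots> = (x + 1) ^ n" by (subst binom_pow) auto
    finally have "(\<Sum>W\<in>Pow {1..n}. x ^ card W) = (x + 1) ^ n" .
    moreover have "(\<Sum>W\<in>Pow {1..n}. x ^ card W) = x ^ card ({}::nat set) + (\<Sum>W\<in>Pow {1..n} - {{}}. x ^ card W)"
      by (rule sum.remove) auto
    ultimately show ?thesis by simp
  qed
  also have "(x + 1) ^ n \<le> exp x ^ n"
    by (rule power_mono) (use exp_ge_add_one_self[of x] in \<open>auto simp: x_def add.commute\<close>)
  also have "exp x ^ n = exp (real n * x)" by (rule exp_of_nat_mult[symmetric])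
  finally have "gnp_prob n p (\<lambda>R. \<not> \<alpha> \<le> iota n (G \<union> R)) \<le> exp (real n * x) - 1" using badb by linarith
  moreover have "gnp_prob n p (\<lambda>R. \<alpha> \<le> iota n (G \<union> R)) + gnp_prob n p (\<lambda>R. \<not> \<alpha> \<le> iota n (G \<union> R)) = 1"
    by (rule gnp_total)
  ultimately show ?thesis unfolding \<alpha>_def p_def x_def D_def L_def by linarith
qed


theorem theorem1:
  fixes \<epsilon> :: real
  assumes "\<epsilon> > 0"
  shows "\<exists>\<delta>>0. \<forall>G :: nat \<Rightarrow> nat set set.
           (\<forall>n. is_graph n (G n) \<and> graph_connected n (G n)) \<longrightarrow>
           (\<lambda>n. gnp_prob n (\<epsilon> / real n)
                  (\<lambda>R. iota n (G n \<union> R) \<ge> \<delta> / (real (max_degree n (G n)) ^ 3 * ln (real n))))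
             \<longlonglongrightarrow> 1"
proof (intro exI[of _ "\<epsilon> / 40"] conjI allI impI)
  show "\<epsilon> / 40 > 0" using assms by simp
  fix G :: "nat \<Rightarrow> nat set set"
  assume G: "\<forall>n. is_graph n (G n) \<and> graph_connected n (G n)"
  let ?g = "\<lambda>n. gnp_prob n (\<epsilon> / real n)
                  (\<lambda>R. iota n (G n \<union> R) \<ge> \<epsilon> / 40 / (real (max_degree n (G n)) ^ 3 * ln (real n)))"
  have ev: "\<forall>\<^sub>F n in sequentially. real n \<ge> max 2 (max \<epsilon> (exp \<epsilon>))" by real_asymp
  show "?g \<longlonglongrightarrow> 1"
  proof (rule tendsto_sandwich[of "\<lambda>n. 2 - exp (real n * exp (- 9 * ln (real n)))" _ _ "\<lambda>_. 1"])
    show "\<forall>\<^sub>F n in sequentially. 2 - exp (real n * exp (- 9 * ln (real n))) \<le> ?g n"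
      using ev
    proof (rule eventually_mono)
      fix n assume n: "max 2 (max \<epsilon> (exp \<epsilon>)) \<le> real n"
      have n2: "n \<ge> 2" using n by simp
      have "\<epsilon> \<le> ln (real n)"
      proof -
        have "exp \<epsilon> \<le> real n" using n by simp
        hence "ln (exp \<epsilon>) \<le> ln (real n)" using n2 by (subst ln_le_cancel_iff) auto
        thus ?thesis by simp
      qed
      thus "2 - exp (real n * exp (- 9 * ln (real n))) \<le> ?g n"
        using main_bound[of n "G n" \<epsilon>] G n2 assms n by auto
    qed
    show "\<forall>\<^sub>F n in sequentially. ?g n \<le> 1"
      using ev
    proof (rule eventually_mono)
      fix n assume n: "max 2 (max \<epsilon> (exp \<epsilon>)) \<le> real n"
      have "0 \<le> \<epsilon> / real n" "\<epsilon> / real n \<le> 1" using n assms by auto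
      from gnp_nonneg[OF this] gnp_total
      show "?g n \<le> 1" by (smt (verit))
    qed
    show "(\<lambda>n. 2 - exp (real n * exp (- 9 * ln (real n)))) \<longlonglongrightarrow> 1" by real_asymp
    show "(\<lambda>_. 1::real) \<longlonglongrightarrow> 1" by simp
  qed
qed

end
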